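(* Let $\lambda=(\lambda_1,\ldots,\lambda_\ell)$ be a partition with $\ell$ positive parts, and let $n\geq\ell$. If there exists $p\in\{1,\ldots,\ell-2\}$ such that $\lambda_p>\lambda_{p+1}\geq\lambda_{p+2}\geq 2$, then the poset $\mathcal B_\lambda^n$ is not a lattice.
   Context: For $N\geq 1$ and a partition $\nu$ with at most $N$ positive parts, $\mathcal B_\nu^N$ is the set of semistandard Young tableaux of shape $\nu$ (rows weakly increasing, columns strictly increasing) with entries in $\{1,\ldots,N+1\}$, partially ordered by the reflexive transitive closure of $T<F_i(T)$ for $i\in\{1,\ldots,N\}$ with $F_i(T)\neq 0$. Here $F_i$ is the type A crystal lowering operator: in the reading word of $T$ (rows read from bottom to top, each row left to right) keep only letters $i$ and $i+1$, replace each $i$ by ")" and each $i+1$ by "(", and match parentheses in the usual way; if there is no unmatched ")", $F_i(T)=0$; otherwise $F_i(T)$ is obtained by changing the entry $i$ corresponding to the rightmost unmatched ")" into $i+1$. *)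

theory Defs
  imports Main
begin

definition is_partition :: "nat list \<Rightarrow> bool" where
  "is_partition lam \<longleftrightarrow> sorted_wrt (\<ge>) lam \<and> (\<forall>x\<in>set lam. 0 < x)"

text \<open>A tableau is a list of rows (row 0 is the top row, English convention).
  SSYT of shape nu with entries in {1..N+1}.\<close>
definition is_ssyt :: "nat \<Rightarrow> nat list \<Rightarrow> nat list list \<Rightarrow> bool" where
  "is_ssyt N nu T \<longleftrightarrow>
     length T = length nu \<and>
     (\<forall>r < length nu. length (T ! r) = nu ! r) \<and>
     (\<forall>r < length nu. sorted (T ! r)) \<and>
     (\<forall>r < length nu. \<forall>x \<in> set (T ! r). 1 \<le> x \<and> x \<le> N + 1) \<and>
     (\<forall>r c. Suc r < length nu \<longrightarrow> c < nu ! Suc r \<longrightarrow> T ! r ! c < T ! Suc r ! c)"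

definition B :: "nat list \<Rightarrow> nat \<Rightarrow> nat list list set" where
  "B nu N = {T. is_ssyt N nu T}"

definition reading_word :: "nat list list \<Rightarrow> nat list" where
  "reading_word T = concat (rev T)"

text \<open>Positions (in the word, 0-indexed, offset k) of unmatched ")" (letters i),
  where each letter i+1 is "(" and each letter i is ")"; parentheses are matched
  in the usual way (scanning left to right; c counts currently unmatched "(").\<close>
fun unmatched_close :: "nat \<Rightarrow> nat \<Rightarrow> nat \<Rightarrow> nat list \<Rightarrow> nat list" where
  "unmatched_close i c k [] = []"
| "unmatched_close i c k (x # xs) =
     (if x = i + 1 then unmatched_close i (c + 1) (Suc k) xs
      else if x = i then
        (if 0 < c then unmatched_close i (c - 1) (Suc k) xs
         else k # unmatched_close i c (Suc k) xs)
      else unmatched_close i c (Suc k) xs)"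

text \<open>Lowering operator on words; None plays the role of 0.\<close>
definition F_word :: "nat \<Rightarrow> nat list \<Rightarrow> nat list option" where
  "F_word i w = (let u = unmatched_close i 0 0 w in
                 if u = [] then None else Some (w[last u := i + 1]))"

fun split_lengths :: "nat list \<Rightarrow> 'a list \<Rightarrow> 'a list list" where
  "split_lengths [] w = []"
| "split_lengths (n # ns) w = take n w # split_lengths ns (drop n w)"

text \<open>Lowering operator on tableaux: apply F_word to the reading word and put
  the letters back into the same cells.\<close>
definition F_tab :: "nat \<Rightarrow> nat list list \<Rightarrow> nat list list option" where
  "F_tab i T = map_option (\<lambda>w. rev (split_lengths (rev (map length T)) w))
                          (F_word i (reading_word T))"

definition crystal_step :: "nat list \<Rightarrow> nat \<Rightarrow> (nat list list \<times> nat list list) set" where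
  "crystal_step nu N = {(T, T'). T \<in> B nu N \<and> (\<exists>i \<in> {1..N}. F_tab i T = Some T')}"

definition crystal_le :: "nat list \<Rightarrow> nat \<Rightarrow> nat list list \<Rightarrow> nat list list \<Rightarrow> bool" where
  "crystal_le nu N T T' \<longleftrightarrow> T \<in> B nu N \<and> T' \<in> B nu N \<and> (T, T') \<in> (crystal_step nu N)\<^sup>*"

definition is_lub_in :: "'a set \<Rightarrow> ('a \<Rightarrow> 'a \<Rightarrow> bool) \<Rightarrow> 'a \<Rightarrow> 'a \<Rightarrow> 'a \<Rightarrow> bool" where
  "is_lub_in A le x y z \<longleftrightarrow> z \<in> A \<and> le x z \<and> le y z \<and>
     (\<forall>u\<in>A. le x u \<longrightarrow> le y u \<longrightarrow> le z u)"

definition is_glb_in :: "'a set \<Rightarrow> ('a \<Rightarrow> 'a \<Rightarrow> bool) \<Rightarrow> 'a \<Rightarrow> 'a \<Rightarrow> 'a \<Rightarrow> bool" where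
  "is_glb_in A le x y z \<longleftrightarrow> z \<in> A \<and> le z x \<and> le z y \<and>
     (\<forall>u\<in>A. le u x \<longrightarrow> le u y \<longrightarrow> le u z)"

definition is_lattice_on :: "'a set \<Rightarrow> ('a \<Rightarrow> 'a \<Rightarrow> bool) \<Rightarrow> bool" where
  "is_lattice_on A le \<longleftrightarrow>
     (\<forall>x\<in>A. \<forall>y\<in>A. (\<exists>z. is_lub_in A le x y z) \<and> (\<exists>z. is_glb_in A le x y z))"

end

theory Submission
  imports Defs
begin

lemma uc_skip:
  "(\<forall>x\<in>set xs. x \<noteq> i \<and> x \<noteq> Suc i) \<Longrightarrow>
   unmatched_close i c j (xs @ ys) = unmatched_close i c (j + length xs) ys"
  by (induction xs arbitrary: j) auto

lemma uc_skip_rep: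
  "v \<noteq> i \<Longrightarrow> v \<noteq> Suc i \<Longrightarrow>
   unmatched_close i c j (replicate m v @ ys) = unmatched_close i c (j + m) ys"
  by (induction m arbitrary: j) auto

lemma uc_open:
  "v = Suc i \<Longrightarrow>
   unmatched_close i c j (replicate m v @ ys) = unmatched_close i (c + m) (j + m) ys"
  by (induction m arbitrary: c j) auto

lemma uc_match:
  "v = i \<Longrightarrow> m \<le> c \<Longrightarrow>
   unmatched_close i c j (replicate m v @ ys) = unmatched_close i (c - m) (j + m) ys"
  by (induction m arbitrary: c j) auto

lemma uc_unm:
  "v = i \<Longrightarrow> c \<le> m \<Longrightarrow>
   unmatched_close i c j (replicate m v @ ys) = [j + c..<j + m] @ unmatched_close i 0 (j + m) ys"
proof (induction m arbitrary: c j)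
  case 0 then show ?case by simp
next
  case (Suc m)
  show ?case
  proof (cases c)
    case 0
    have "unmatched_close i 0 j (replicate (Suc m) v @ ys) = j # unmatched_close i 0 (Suc j) (replicate m v @ ys)"
      using Suc.prems by simp
    also have "\<dots> = j # [Suc j..<Suc j + m] @ unmatched_close i 0 (Suc j + m) ys"
      using Suc.IH[of 0 "Suc j"] Suc.prems by simp
    finally show ?thesis using 0 by (simp add: upt_rec)
  next
    case (Suc c')
    then show ?thesis using Suc.IH[of c' "Suc j"] \<open>c \<le> Suc m\<close> \<open>v = i\<close> by simp
  qed
qed

lemma uc_nil:
  "(\<forall>x\<in>set xs. x \<noteq> i) \<Longrightarrow> unmatched_close i c j xs = []"
  by (induction xs arbitrary: c j) auto

lemma uc_set:
  "jj \<in> set (unmatched_close i c j xs) \<Longrightarrow> j \<le> jj \<and> jj < j + length xs \<and> xs ! (jj - j) = i"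
proof (induction xs arbitrary: c j)
  case Nil then show ?case by simp
next
  case (Cons x xs)
  show ?case
  proof (cases "x = Suc i")
    case True
    with Cons show ?thesis by (fastforce simp: nth_Cons')
  next
    case False
    note F = False
    show ?thesis
    proof (cases "x = i")
      case True
      show ?thesis
      proof (cases "0 < c")
        case True
        with Cons F \<open>x = i\<close> show ?thesis by (fastforce simp: nth_Cons')
      next
        case False
        with Cons.prems F \<open>x = i\<close> have "jj = j \<or> jj \<in> set (unmatched_close i c (Suc j) xs)" by auto
        then show ?thesis
        proof
          assume "jj = j" then show ?thesis using \<open>x = i\<close> by simp
        next
          assume "jj \<in> set (unmatched_close i c (Suc j) xs)"
          from Cons.IH[OF this] show ?thesis by (auto simp: nth_Cons')
        qed
      qed
    next
      case False
      with Cons F show ?thesis by (fastforce simp: nth_Cons')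
    qed
  qed
qed

lemma split_concat: "split_lengths (map length Rs) (concat Rs @ ys) = Rs"
  by (induction Rs) auto

lemma split_concat0: "split_lengths (map length Rs) (concat Rs) = Rs"
  using split_concat[of Rs "[]"] by simp

lemma concat_split: "length w = sum_list ns \<Longrightarrow> concat (split_lengths ns w) = w"
  by (induction ns arbitrary: w) (auto simp: min_def)

lemma length_split: "length w = sum_list ns \<Longrightarrow> map length (split_lengths ns w) = ns"
  by (induction ns arbitrary: w) (auto simp: min_def)

lemma length_concat_sum: "length (concat Rs) = sum_list (map length Rs)"
  by (simp add: length_concat)

lemma F_tab_from_word:
  assumes "F_word i (reading_word T) = Some (reading_word T')"
    and "map length T' = map length T"
  shows "F_tab i T = Some T'"
proof -
  have "rev (split_lengths (rev (map length T)) (reading_word T')) = T'"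
    using split_concat0[of "rev T'"] assms(2) unfolding reading_word_def
    by (metis rev_map rev_rev_ident)
  then show ?thesis using assms(1) unfolding F_tab_def by simp
qed

lemma F_step:
  assumes "F_tab i T = Some T'"
  shows "\<exists>j < length (reading_word T). reading_word T ! j = i \<and>
           reading_word T' = (reading_word T)[j := Suc i] \<and> map length T' = map length T"
proof -
  define w where "w = reading_word T"
  define u where "u = unmatched_close i 0 0 w"
  from assms have ne: "u \<noteq> []" and T': "T' = rev (split_lengths (rev (map length T)) (w[last u := i+1]))"
    unfolding F_tab_def F_word_def u_def w_def Let_def by (auto split: if_splits)
  have "last u \<in> set u" using ne by simp
  then have j: "last u < length w" "w ! last u = i"
    using uc_set[of "last u" i 0 0 w] unfolding u_def by auto
  have lw: "length (w[last u := i+1]) = sum_list (rev (map length T))"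
    by (simp add: w_def reading_word_def length_concat sum_list_rev rev_map)
  have "reading_word T' = w[last u := Suc i]"
    unfolding T' reading_word_def using concat_split[OF lw] by simp
  moreover have "map length T' = map length T"
    unfolding T' using length_split[OF lw] by (metis rev_map rev_rev_ident)
  ultimately show ?thesis using j unfolding w_def by blast
qed

definition tle :: "nat list list \<Rightarrow> nat list list \<Rightarrow> bool" where
  "tle X Y \<longleftrightarrow> list_all2 (list_all2 (\<le>)) X Y"

lemma tle_refl: "tle A A"
  unfolding tle_def by (simp add: list_all2_refl)

lemma tle_trans: "tle X Y \<Longrightarrow> tle Y Z \<Longrightarrow> tle X Z"
proof -
  have inner: "\<And>a b c. list_all2 (\<le>) a b \<Longrightarrow> list_all2 (\<le>) b c \<Longrightarrow> list_all2 (\<le>) a (c::nat list)"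
    using list_all2_trans[of "(\<le>)::nat\<Rightarrow>nat\<Rightarrow>bool" "(\<le>)" "(\<le>)"] order_trans by blast
  show "tle X Y \<Longrightarrow> tle Y Z \<Longrightarrow> tle X Z" unfolding tle_def
    using list_all2_trans[of "list_all2 (\<le>)" "list_all2 (\<le>)" "list_all2 (\<le>)"] inner by blast
qed

lemma list_all2_split:
  "list_all2 (\<le>) (concat Rs) w \<Longrightarrow> list_all2 (list_all2 (\<le>)) Rs (split_lengths (map length Rs) w)"
proof (induction Rs arbitrary: w)
  case Nil then show ?case by simp
next
  case (Cons r Rs)
  from Cons.prems have "list_all2 (\<le>) (r @ concat Rs) w" by simp
  then obtain w1 w2 where "w = w1 @ w2" "list_all2 (\<le>) r w1" "list_all2 (\<le>) (concat Rs) w2"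
    using list_all2_append1 by blast
  moreover then have "length w1 = length r" by (simp add: list_all2_lengthD)
  ultimately show ?case using Cons.IH by simp
qed

lemma word_le_upd: "j < length w \<Longrightarrow> w ! j = i \<Longrightarrow> list_all2 (\<le>) w (w[j := Suc i])"
  by (auto simp: list_all2_conv_all_nth nth_list_update)

lemma F_tle:
  assumes "F_tab i T = Some T'"
  shows "tle T T'"
proof -
  from F_step[OF assms] obtain j where j: "j < length (reading_word T)" "reading_word T ! j = i"
    and w: "reading_word T' = (reading_word T)[j := Suc i]" and l: "map length T' = map length T" by blast
  have "list_all2 (\<le>) (concat (rev T)) (reading_word T')"
    using word_le_upd[OF j] w unfolding reading_word_def by simp
  from list_all2_split[OF this] have "list_all2 (list_all2 (\<le>)) (rev T) (split_lengths (map length (rev T)) (reading_word T'))" .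
  moreover have "split_lengths (map length (rev T)) (reading_word T') = rev T'"
    using split_concat0[of "rev T'"] l unfolding reading_word_def by (metis rev_map)
  ultimately show ?thesis unfolding tle_def by (metis list_all2_rev rev_rev_ident)
qed

lemma crystal_le_tle:
  assumes "crystal_le nu N A C" shows "tle A C"
proof -
  from assms have "(A, C) \<in> (crystal_step nu N)\<^sup>*" unfolding crystal_le_def by simp
  then show ?thesis
  proof (induction rule: rtrancl_induct)
    case base then show ?case by (rule tle_refl)
  next
    case (step y z)
    then obtain i where "F_tab i y = Some z" unfolding crystal_step_def by auto
    from F_tle[OF this] step.IH show ?case using tle_trans by blast
  qed
qed

lemma list_all2_concat:
  "list_all2 (list_all2 P) X Y \<Longrightarrow> list_all2 P (concat X) (concat Y)"
  by (induction rule: list_all2_induct) (auto intro: list_all2_appendI)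

lemma tle_reading: "tle A C \<Longrightarrow> list_all2 (\<le>) (reading_word A) (reading_word C)"
  unfolding tle_def reading_word_def
  by (metis list_all2_rev list_all2_concat)  

definition rowA :: "nat \<Rightarrow> nat \<Rightarrow> nat \<Rightarrow> nat \<Rightarrow> nat \<Rightarrow> nat list" where
  "rowA k a1 a2 a3 a4 = replicate a1 (k+1) @ replicate a2 (k+2) @ replicate a3 (k+3) @ replicate a4 (k+4)"
definition rowB :: "nat \<Rightarrow> nat \<Rightarrow> nat \<Rightarrow> nat \<Rightarrow> nat list" where
  "rowB k b2 b3 b4 = replicate b2 (k+2) @ replicate b3 (k+3) @ replicate b4 (k+4)"
definition rowC :: "nat \<Rightarrow> nat \<Rightarrow> nat \<Rightarrow> nat list" where
  "rowC k c3 c4 = replicate c3 (k+3) @ replicate c4 (k+4)"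
definition rowsAbove :: "nat list \<Rightarrow> nat \<Rightarrow> nat list list" where
  "rowsAbove lam k = map (\<lambda>r. replicate (lam!r) (Suc r)) [0..<k]"
definition rowsBelow :: "nat list \<Rightarrow> nat \<Rightarrow> nat list list" where
  "rowsBelow lam k = map (\<lambda>r. replicate (lam!r) (r+2)) [k+3..<length lam]"
definition gt :: "nat list \<Rightarrow> nat \<Rightarrow> nat list \<Rightarrow> nat list \<Rightarrow> nat list \<Rightarrow> nat list list" where
  "gt lam k ra rb rc = rowsAbove lam k @ [ra, rb, rc] @ rowsBelow lam k"

abbreviation Wb where "Wb lam k \<equiv> concat (rev (rowsBelow lam k))"
abbreviation Wa where "Wa lam k \<equiv> concat (rev (rowsAbove lam k))"

lemma reading_gt: "reading_word (gt lam k ra rb rc) = Wb lam k @ rc @ rb @ ra @ Wa lam k"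
  unfolding reading_word_def gt_def by simp

lemma set_Wb: "x \<in> set (Wb lam k) \<Longrightarrow> k + 5 \<le> x"
  unfolding rowsBelow_def by auto

lemma set_Wa: "x \<in> set (Wa lam k) \<Longrightarrow> x \<le> k"
  unfolding rowsAbove_def by auto

lemma uc_rowsBelow: assumes "i \<le> k + 3" shows "
  unmatched_close i c j (Wb lam k @ ys) = unmatched_close i c (j + length (Wb lam k)) ys"
proof (rule uc_skip)
  show "\<forall>x\<in>set (Wb lam k). x \<noteq> i \<and> x \<noteq> Suc i" using set_Wb[of _ lam k] assms by fastforce
qed

lemma uc_rowsAbove: assumes "k < i" shows "unmatched_close i c j (Wa lam k) = []"
proof (rule uc_nil)
  show "\<forall>x\<in>set (Wa lam k). x \<noteq> i" using set_Wa[of _ lam k] assms by fastforce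
qed

lemma upd_rep: "0 < m \<Longrightarrow> j = length X + m - 1 \<Longrightarrow>
  (X @ replicate m v @ Y)[j := v'] = X @ replicate (m - 1) v @ v' # Y"
proof (cases m)
  case (Suc m')
  assume "j = length X + m - 1"
  then have "j = length X + m'" using Suc by simp
  moreover have "replicate m v = replicate m' v @ [v]" using Suc by (simp add: replicate_append_same)
  ultimately show ?thesis using Suc by (simp add: list_update_append)
qed simp

lemma F1a:
  assumes "b2 < a1" "a1 = Suc a1'" "a2' = Suc a2"
  shows "F_tab (k+1) (gt lam k (rowA k a1 a2 a3 a4) (rowB k b2 b3 b4) (rowC k c3 c4))
       = Some (gt lam k (rowA k a1' a2' a3 a4) (rowB k b2 b3 b4) (rowC k c3 c4))"
proof (rule F_tab_from_word)
  show "map length (gt lam k (rowA k a1' a2' a3 a4) (rowB k b2 b3 b4) (rowC k c3 c4)) =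
        map length (gt lam k (rowA k a1 a2 a3 a4) (rowB k b2 b3 b4) (rowC k c3 c4))"
    using assms by (simp add: gt_def rowA_def)
  define J where "J = length (Wb lam k) + c3 + c4 + b2 + b3 + b4"
  have u: "unmatched_close (k+1) 0 0 (reading_word (gt lam k (rowA k a1 a2 a3 a4) (rowB k b2 b3 b4) (rowC k c3 c4)))
     = [J + b2..<J + a1]"
    using assms unfolding reading_gt rowA_def rowB_def rowC_def J_def
    apply (simp add: uc_rowsBelow uc_skip_rep uc_open uc_unm uc_rowsAbove add.assoc)
    apply (auto simp: upt_conv_Cons)
    done
  have w: "reading_word (gt lam k (rowA k a1 a2 a3 a4) (rowB k b2 b3 b4) (rowC k c3 c4))
     = (Wb lam k @ rowC k c3 c4 @ rowB k b2 b3 b4) @ replicate a1 (k+1) @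
        (replicate a2 (k+2) @ replicate a3 (k+3) @ replicate a4 (k+4) @ Wa lam k)"
    unfolding reading_gt rowA_def by simp
  have lx: "length (Wb lam k @ rowC k c3 c4 @ rowB k b2 b3 b4) = J"
    unfolding J_def rowC_def rowB_def by simp
  show "F_word (k+1) (reading_word (gt lam k (rowA k a1 a2 a3 a4) (rowB k b2 b3 b4) (rowC k c3 c4))) =
        Some (reading_word (gt lam k (rowA k a1' a2' a3 a4) (rowB k b2 b3 b4) (rowC k c3 c4)))"
  proof -
    have ne: "[J + b2..<J + a1] \<noteq> []" and la: "last [J + b2..<J + a1] = J + a1 - 1"
      using assms(1) by auto
    have upd: "(reading_word (gt lam k (rowA k a1 a2 a3 a4) (rowB k b2 b3 b4) (rowC k c3 c4)))[J + a1 - 1 := k+1+1]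
       = reading_word (gt lam k (rowA k a1' a2' a3 a4) (rowB k b2 b3 b4) (rowC k c3 c4))"
      unfolding w using lx assms by (subst upd_rep) (auto simp: reading_gt rowA_def)
    show ?thesis unfolding F_word_def Let_def u using ne la upd by simp
  qed
qed

lemma F2a:
  assumes "c3 \<le> b2" "b3 < a2" "a2 = Suc a2'" "a3' = Suc a3"
  shows "F_tab (k+2) (gt lam k (rowA k a1 a2 a3 a4) (rowB k b2 b3 b4) (rowC k c3 c4)) = Some (gt lam k (rowA k a1 a2' a3' a4) (rowB k b2 b3 b4) (rowC k c3 c4))"
proof (rule F_tab_from_word)
  show "map length (gt lam k (rowA k a1 a2' a3' a4) (rowB k b2 b3 b4) (rowC k c3 c4)) = map length (gt lam k (rowA k a1 a2 a3 a4) (rowB k b2 b3 b4) (rowC k c3 c4))"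
    using assms by (simp add: gt_def rowA_def rowB_def rowC_def)
  define J where "J = length (Wb lam k) + c3 + c4 + b2 + b3 + b4 + a1"
  have u: "unmatched_close (k+2) 0 0 (reading_word (gt lam k (rowA k a1 a2 a3 a4) (rowB k b2 b3 b4) (rowC k c3 c4))) = [length (Wb lam k) + c3 + c4 + c3..<length (Wb lam k) + c3 + c4 + b2] @ [J + b3..<J + a2]"
    using assms unfolding reading_gt rowA_def rowB_def rowC_def J_def
    apply (simp add: uc_rowsBelow uc_skip_rep uc_open uc_unm uc_match uc_rowsAbove add.assoc)
    apply (auto simp: upt_conv_Cons)
    done
  have w: "reading_word (gt lam k (rowA k a1 a2 a3 a4) (rowB k b2 b3 b4) (rowC k c3 c4)) = (Wb lam k @ rowC k c3 c4 @ rowB k b2 b3 b4 @ replicate a1 (k+1)) @ replicate a2 (k+2) @ (replicate a3 (k+3) @ replicate a4 (k+4) @ Wa lam k)"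
    unfolding reading_gt rowA_def rowB_def rowC_def by simp
  have lx: "length (Wb lam k @ rowC k c3 c4 @ rowB k b2 b3 b4 @ replicate a1 (k+1)) = J"
    unfolding J_def rowA_def rowC_def rowB_def by simp
  show "F_word (k+2) (reading_word (gt lam k (rowA k a1 a2 a3 a4) (rowB k b2 b3 b4) (rowC k c3 c4))) = Some (reading_word (gt lam k (rowA k a1 a2' a3' a4) (rowB k b2 b3 b4) (rowC k c3 c4)))"
  proof -
    have ne: "[length (Wb lam k) + c3 + c4 + c3..<length (Wb lam k) + c3 + c4 + b2] @ [J + b3..<J + a2] \<noteq> []" and la: "last ([length (Wb lam k) + c3 + c4 + c3..<length (Wb lam k) + c3 + c4 + b2] @ [J + b3..<J + a2]) = J + a2 - 1"
      using assms by (auto simp: J_def)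
    have upd: "(reading_word (gt lam k (rowA k a1 a2 a3 a4) (rowB k b2 b3 b4) (rowC k c3 c4)))[J + a2 - 1 := k+2+1]
       = reading_word (gt lam k (rowA k a1 a2' a3' a4) (rowB k b2 b3 b4) (rowC k c3 c4))"
      unfolding w using lx assms by (subst upd_rep) (auto simp: reading_gt rowA_def rowB_def rowC_def)
    show ?thesis unfolding F_word_def Let_def u using ne la upd by simp
  qed
qed

lemma F2b:
  assumes "c3 < b2" "a2 \<le> b3" "b2 = Suc b2'" "b3' = Suc b3"
  shows "F_tab (k+2) (gt lam k (rowA k a1 a2 a3 a4) (rowB k b2 b3 b4) (rowC k c3 c4)) = Some (gt lam k (rowA k a1 a2 a3 a4) (rowB k b2' b3' b4) (rowC k c3 c4))"
proof (rule F_tab_from_word)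
  show "map length (gt lam k (rowA k a1 a2 a3 a4) (rowB k b2' b3' b4) (rowC k c3 c4)) = map length (gt lam k (rowA k a1 a2 a3 a4) (rowB k b2 b3 b4) (rowC k c3 c4))"
    using assms by (simp add: gt_def rowA_def rowB_def rowC_def)
  define J where "J = length (Wb lam k) + c3 + c4"
  have u: "unmatched_close (k+2) 0 0 (reading_word (gt lam k (rowA k a1 a2 a3 a4) (rowB k b2 b3 b4) (rowC k c3 c4))) = [J + c3..<J + b2]"
    using assms unfolding reading_gt rowA_def rowB_def rowC_def J_def
    apply (simp add: uc_rowsBelow uc_skip_rep uc_open uc_unm uc_match uc_rowsAbove add.assoc)
    apply (auto simp: upt_conv_Cons)
    done
  have w: "reading_word (gt lam k (rowA k a1 a2 a3 a4) (rowB k b2 b3 b4) (rowC k c3 c4)) = (Wb lam k @ rowC k c3 c4) @ replicate b2 (k+2) @ (replicate b3 (k+3) @ replicate b4 (k+4) @ rowA k a1 a2 a3 a4 @ Wa lam k)"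
    unfolding reading_gt rowA_def rowB_def rowC_def by simp
  have lx: "length (Wb lam k @ rowC k c3 c4) = J"
    unfolding J_def rowA_def rowC_def rowB_def by simp
  show "F_word (k+2) (reading_word (gt lam k (rowA k a1 a2 a3 a4) (rowB k b2 b3 b4) (rowC k c3 c4))) = Some (reading_word (gt lam k (rowA k a1 a2 a3 a4) (rowB k b2' b3' b4) (rowC k c3 c4)))"
  proof -
    have ne: "[J + c3..<J + b2] \<noteq> []" and la: "last ([J + c3..<J + b2]) = J + b2 - 1"
      using assms by (auto simp: J_def)
    have upd: "(reading_word (gt lam k (rowA k a1 a2 a3 a4) (rowB k b2 b3 b4) (rowC k c3 c4)))[J + b2 - 1 := k+2+1]
       = reading_word (gt lam k (rowA k a1 a2 a3 a4) (rowB k b2' b3' b4) (rowC k c3 c4))"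
      unfolding w using lx assms by (subst upd_rep) (auto simp: reading_gt rowA_def rowB_def rowC_def)
    show ?thesis unfolding F_word_def Let_def u using ne la upd by simp
  qed
qed

lemma F3c:
  assumes "0 < c3" "b3 \<le> c4" "a3 \<le> c4 - b3 + b4" "c3 = Suc c3'" "c4' = Suc c4"
  shows "F_tab (k+3) (gt lam k (rowA k a1 a2 a3 a4) (rowB k b2 b3 b4) (rowC k c3 c4)) = Some (gt lam k (rowA k a1 a2 a3 a4) (rowB k b2 b3 b4) (rowC k c3' c4'))"
proof (rule F_tab_from_word)
  show "map length (gt lam k (rowA k a1 a2 a3 a4) (rowB k b2 b3 b4) (rowC k c3' c4')) = map length (gt lam k (rowA k a1 a2 a3 a4) (rowB k b2 b3 b4) (rowC k c3 c4))"
    using assms by (simp add: gt_def rowA_def rowB_def rowC_def)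
  define J where "J = length (Wb lam k)"
  have u: "unmatched_close (k+3) 0 0 (reading_word (gt lam k (rowA k a1 a2 a3 a4) (rowB k b2 b3 b4) (rowC k c3 c4))) = [J..<J + c3]"
    using assms unfolding reading_gt rowA_def rowB_def rowC_def J_def
    apply (simp add: uc_rowsBelow uc_skip_rep uc_open uc_unm uc_match uc_rowsAbove add.assoc)
    apply (auto simp: upt_conv_Cons)
    done
  have w: "reading_word (gt lam k (rowA k a1 a2 a3 a4) (rowB k b2 b3 b4) (rowC k c3 c4)) = (Wb lam k) @ replicate c3 (k+3) @ (replicate c4 (k+4) @ rowB k b2 b3 b4 @ rowA k a1 a2 a3 a4 @ Wa lam k)"
    unfolding reading_gt rowA_def rowB_def rowC_def by simp
  have lx: "length (Wb lam k) = J"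
    unfolding J_def rowA_def rowC_def rowB_def by simp
  show "F_word (k+3) (reading_word (gt lam k (rowA k a1 a2 a3 a4) (rowB k b2 b3 b4) (rowC k c3 c4))) = Some (reading_word (gt lam k (rowA k a1 a2 a3 a4) (rowB k b2 b3 b4) (rowC k c3' c4')))"
  proof -
    have ne: "[J..<J + c3] \<noteq> []" and la: "last ([J..<J + c3]) = J + c3 - 1"
      using assms by (auto simp: J_def)
    have upd: "(reading_word (gt lam k (rowA k a1 a2 a3 a4) (rowB k b2 b3 b4) (rowC k c3 c4)))[J + c3 - 1 := k+3+1]
       = reading_word (gt lam k (rowA k a1 a2 a3 a4) (rowB k b2 b3 b4) (rowC k c3' c4'))"
      unfolding w using lx assms by (subst upd_rep) (auto simp: reading_gt rowA_def rowB_def rowC_def)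
    show ?thesis unfolding F_word_def Let_def u using ne la upd by simp
  qed
qed

lemma F3a:
  assumes "b3 = c4" "b4 < a3" "a3 = Suc a3'" "a4' = Suc a4"
  shows "F_tab (k+3) (gt lam k (rowA k a1 a2 a3 a4) (rowB k b2 b3 b4) (rowC k c3 c4)) = Some (gt lam k (rowA k a1 a2 a3' a4') (rowB k b2 b3 b4) (rowC k c3 c4))"
proof (rule F_tab_from_word)
  show "map length (gt lam k (rowA k a1 a2 a3' a4') (rowB k b2 b3 b4) (rowC k c3 c4)) = map length (gt lam k (rowA k a1 a2 a3 a4) (rowB k b2 b3 b4) (rowC k c3 c4))"
    using assms by (simp add: gt_def rowA_def rowB_def rowC_def)
  define J where "J = length (Wb lam k) + c3 + c4 + b2 + b3 + b4 + a1 + a2"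
  have u: "unmatched_close (k+3) 0 0 (reading_word (gt lam k (rowA k a1 a2 a3 a4) (rowB k b2 b3 b4) (rowC k c3 c4))) = [length (Wb lam k)..<length (Wb lam k) + c3] @ [J + b4..<J + a3]"
    using assms unfolding reading_gt rowA_def rowB_def rowC_def J_def
    apply (simp add: uc_rowsBelow uc_skip_rep uc_open uc_unm uc_match uc_rowsAbove add.assoc)
    apply (auto simp: upt_conv_Cons)
    done
  have w: "reading_word (gt lam k (rowA k a1 a2 a3 a4) (rowB k b2 b3 b4) (rowC k c3 c4)) = (Wb lam k @ rowC k c3 c4 @ rowB k b2 b3 b4 @ replicate a1 (k+1) @ replicate a2 (k+2)) @ replicate a3 (k+3) @ (replicate a4 (k+4) @ Wa lam k)"
    unfolding reading_gt rowA_def rowB_def rowC_def by simp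
  have lx: "length (Wb lam k @ rowC k c3 c4 @ rowB k b2 b3 b4 @ replicate a1 (k+1) @ replicate a2 (k+2)) = J"
    unfolding J_def rowA_def rowC_def rowB_def by simp
  show "F_word (k+3) (reading_word (gt lam k (rowA k a1 a2 a3 a4) (rowB k b2 b3 b4) (rowC k c3 c4))) = Some (reading_word (gt lam k (rowA k a1 a2 a3' a4') (rowB k b2 b3 b4) (rowC k c3 c4)))"
  proof -
    have ne: "[length (Wb lam k)..<length (Wb lam k) + c3] @ [J + b4..<J + a3] \<noteq> []" and la: "last ([length (Wb lam k)..<length (Wb lam k) + c3] @ [J + b4..<J + a3]) = J + a3 - 1"
      using assms by (auto simp: J_def)
    have upd: "(reading_word (gt lam k (rowA k a1 a2 a3 a4) (rowB k b2 b3 b4) (rowC k c3 c4)))[J + a3 - 1 := k+3+1]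
       = reading_word (gt lam k (rowA k a1 a2 a3' a4') (rowB k b2 b3 b4) (rowC k c3 c4))"
      unfolding w using lx assms by (subst upd_rep) (auto simp: reading_gt rowA_def rowB_def rowC_def)
    show ?thesis unfolding F_word_def Let_def u using ne la upd by simp
  qed
qed

lemma length_gt: "k + 3 \<le> length lam \<Longrightarrow> length (gt lam k ra rb rc) = length lam"
  unfolding gt_def rowsAbove_def rowsBelow_def by simp

lemma nth_gt: assumes "r < length lam" "k + 3 \<le> length lam"
  shows "gt lam k ra rb rc ! r = (if r < k then replicate (lam!r) (Suc r) else if r = k then ra
     else if r = Suc k then rb else if r = k + 2 then rc else replicate (lam!r) (r+2))"
proof -
  have la: "length (rowsAbove lam k) = k" unfolding rowsAbove_def by simp
  show ?thesis
  proof (cases "r < k")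
    case True then show ?thesis unfolding gt_def using la by (simp add: nth_append rowsAbove_def)
  next
    case False
    then obtain d where d: "r = k + d" by (metis le_add_diff_inverse not_less)
    show ?thesis
    proof (cases "d < 3")
      case True
      then have "d = 0 \<or> d = 1 \<or> d = 2" by auto
      then show ?thesis unfolding gt_def using la d by (auto simp: nth_append)
    next
      case False
      then obtain e where e: "d = 3 + e" by (metis le_add_diff_inverse not_less)
      have "e < length lam - (k+3)" using assms d e by simp
      then show ?thesis unfolding gt_def using la d e by (simp add: nth_append rowsBelow_def add.assoc)
    qed
  qed
qed

lemma nth_rowA: "c < a1 + a2 + a3 + a4 \<Longrightarrow> rowA k a1 a2 a3 a4 ! c =
  (if c < a1 then k+1 else if c < a1 + a2 then k+2 else if c < a1 + a2 + a3 then k+3 else k+4)"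
  unfolding rowA_def by (auto simp: nth_append)

lemma nth_rowB: "c < b2 + b3 + b4 \<Longrightarrow> rowB k b2 b3 b4 ! c =
  (if c < b2 then k+2 else if c < b2 + b3 then k+3 else k+4)"
  unfolding rowB_def by (auto simp: nth_append)

lemma nth_rowC: "c < c3 + c4 \<Longrightarrow> rowC k c3 c4 ! c = (if c < c3 then k+3 else k+4)"
  unfolding rowC_def by (simp add: nth_append)

lemma part_mono: "is_partition lam \<Longrightarrow> r \<le> s \<Longrightarrow> s < length lam \<Longrightarrow> lam ! s \<le> lam ! r"
  unfolding is_partition_def
  by (metis le_eq_less_or_eq sorted_wrt_nth_less)

lemma ssyt_gt:
  assumes part: "is_partition lam" and len: "length lam \<le> n" and kl: "k + 3 \<le> length lam"
    and sa: "a1+a2+a3+a4 = lam!k" and sb: "b2+b3+b4 = lam!(k+1)" and sc: "c3+c4 = lam!(k+2)"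
    and h1: "b2 \<le> a1" and h2: "b2 + b3 \<le> a1 + a2" and h3: "lam!(k+1) \<le> a1+a2+a3"
    and h4: "c3 \<le> b2" and h5: "lam!(k+2) \<le> b2 + b3"
  shows "gt lam k (rowA k a1 a2 a3 a4) (rowB k b2 b3 b4) (rowC k c3 c4) \<in> B lam n"
proof -
  define T where "T = gt lam k (rowA k a1 a2 a3 a4) (rowB k b2 b3 b4) (rowC k c3 c4)"
  have lT: "length T = length lam" unfolding T_def using kl by (rule length_gt)
  have nT: "\<And>r. r < length lam \<Longrightarrow> T ! r = (if r < k then replicate (lam!r) (Suc r)
     else if r = k then rowA k a1 a2 a3 a4
     else if r = Suc k then rowB k b2 b3 b4 else if r = k + 2 then rowC k c3 c4 else replicate (lam!r) (r+2))"
    unfolding T_def using kl nth_gt by blast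
  have c1: "\<forall>r < length lam. length (T ! r) = lam ! r"
    using nT sa sb sc by (auto simp: rowA_def rowB_def rowC_def)
  have c2: "\<forall>r < length lam. sorted (T ! r)"
    using nT by (auto simp: rowA_def rowB_def rowC_def sorted_append)
  have c3: "\<forall>r < length lam. \<forall>x \<in> set (T ! r). 1 \<le> x \<and> x \<le> n + 1"
    using nT kl len by (auto simp: rowA_def rowB_def rowC_def split: if_splits)
  have c4: "T ! r ! c < T ! Suc r ! c" if r: "Suc r < length lam" and c: "c < lam ! Suc r" for r c
  proof -
    have mono: "lam ! Suc r \<le> lam ! r" using part_mono[OF part, of r "Suc r"] r by simp
    consider "Suc r < k" | "Suc r = k" | "r = k" | "r = Suc k" | "r = k + 2" | "k + 3 \<le> r" by linarith
    then show ?thesis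
    proof cases
      case 1 then show ?thesis using nT r c mono by simp
    next
      case 2
      have "c < a1+a2+a3+a4" using c sa 2 by simp
      then show ?thesis using nT r c mono 2 by (simp add: nth_rowA)
    next
      case 3
      have "c < b2+b3+b4" using c sb 3 by simp
      moreover have "c < a1+a2+a3+a4" using c sa 3 mono by simp
      ultimately show ?thesis using nT r 3 h1 h2 h3 c by (simp add: nth_rowA nth_rowB)
    next
      case 4
      have "c < c3 + c4" using c sc 4 by simp
      moreover have "c < b2+b3+b4" using c sb 4 mono by simp
      ultimately show ?thesis using nT r 4 h4 h5 c by (simp add: nth_rowC nth_rowB)
    next
      case 5
      have "c < c3 + c4" using c sc 5 mono by simp
      then show ?thesis using nT r 5 c by (simp add: nth_rowC)
    next
      case 6 then show ?thesis using nT r c mono by simp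
    qed
  qed
  show ?thesis unfolding B_def is_ssyt_def T_def[symmetric] using lT c1 c2 c3 c4 by blast
qed

lemma star_tle:
  assumes "(X, Y) \<in> (crystal_step nu N)\<^sup>*" shows "tle X Y"
  using assms
proof (induction rule: rtrancl_induct)
  case base then show ?case by (rule tle_refl)
next
  case (step y z)
  then obtain i where "F_tab i y = Some z" unfolding crystal_step_def by auto
  from F_tle[OF this] step.IH show ?case using tle_trans by blast
qed

lemma tle_squeeze:
  assumes "tle m1 z" "tle m2 z" "tle z x"
    and mx: "\<forall>r<length x. \<forall>c<length (x!r). x!r!c \<le> max (m1!r!c) (m2!r!c)"
  shows "z = x"
proof -
  from assms(3) have l: "length z = length x" and zx: "\<forall>r<length z. list_all2 (\<le>) (z!r) (x!r)"
    unfolding tle_def by (auto simp: list_all2_conv_all_nth)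
  from assms(1) have l1: "length m1 = length z" and m1z: "\<forall>r<length z. list_all2 (\<le>) (m1!r) (z!r)"
    unfolding tle_def by (auto simp: list_all2_conv_all_nth)
  from assms(2) have l2: "length m2 = length z" and m2z: "\<forall>r<length z. list_all2 (\<le>) (m2!r) (z!r)"
    unfolding tle_def by (auto simp: list_all2_conv_all_nth)
  show ?thesis
  proof (rule nth_equalityI)
    show "length z = length x" by (rule l)
    fix r assume r: "r < length z"
    from zx r have a: "length (z!r) = length (x!r)" "\<forall>c<length (z!r). z!r!c \<le> x!r!c"
      by (auto simp: list_all2_conv_all_nth)
    from m1z r have b: "length (m1!r) = length (z!r)" "\<forall>c<length (m1!r). m1!r!c \<le> z!r!c"
      by (auto simp: list_all2_conv_all_nth)
    from m2z r have d: "length (m2!r) = length (z!r)" "\<forall>c<length (m2!r). m2!r!c \<le> z!r!c"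
      by (auto simp: list_all2_conv_all_nth)
    show "z ! r = x ! r"
    proof (rule nth_equalityI)
      show "length (z!r) = length (x!r)" by (rule a(1))
      fix c assume c: "c < length (z!r)"
      have rx: "r < length x" using r l by simp
      have cx: "c < length (x!r)" using c a by simp
      have 1: "x!r!c \<le> max (m1!r!c) (m2!r!c)" using mx rx cx by blast
      have 2: "z!r!c \<le> x!r!c" using a c by blast
      have 3: "m1!r!c \<le> z!r!c" using b c by simp
      have 4: "m2!r!c \<le> z!r!c" using d c by simp
      show "z!r!c = x!r!c" using 1 2 3 4 by linarith
    qed
  qed
qed

theorem lemma5p4:
  fixes lam :: "nat list" and n p :: nat
  assumes "is_partition lam"
    and "length lam \<le> n"
    and "1 \<le> p" and "p \<le> length lam - 2"
    and "lam ! (p - 1) > lam ! p"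
    and "lam ! p \<ge> lam ! (p + 1)"
    and "lam ! (p + 1) \<ge> 2"
  shows "\<not> is_lattice_on (B lam n) (crystal_le lam n)"
proof
  assume lat: "is_lattice_on (B lam n) (crystal_le lam n)"
  note part = assms(1) and len = assms(2)
  obtain k where pk: "p = Suc k" using assms(3) by (cases p) auto
  have kl: "k + 3 \<le> length lam" using assms(3,4) pk by linarith
  define L1 where "L1 = lam!k"
  define L2 where "L2 = lam!(k+1)"
  define L3 where "L3 = lam!(k+2)"
  have e: "lam!k = L1" "lam!(k+1) = L2" "lam!(k+2) = L3" unfolding L1_def L2_def L3_def by simp_all
  have hyp: "L2 < L1" "L3 \<le> L2" "2 \<le> L3"
    using assms(5,6,7) pk unfolding L1_def L2_def L3_def by (simp_all add: numeral_2_eq_2)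
  define A1 where "A1 = L2 - L3 + 1"
  define A2 where "A2 = L3 - 1"
  define A4 where "A4 = L1 - L2 - 1"
  have hA: "1 \<le> A1" "1 \<le> A2" "L3 = Suc A2" "A1 + A2 = L2" "A1 + A2 + 1 + A4 = L1"
    using hyp unfolding A1_def A2_def A4_def by linarith+
  define x where "x = gt lam k (rowA k A1 A2 1 A4) (rowB k A1 A2 0) (rowC k 1 A2)"
  define y where "y = gt lam k (rowA k A1 A2 1 A4) (rowB k A1 A2 0) (rowC k 0 L3)"
  define m1 where "m1 = gt lam k (rowA k (Suc A1) (A2 - 1) 1 A4) (rowB k (Suc A1) (A2 - 1) 0) (rowC k 1 A2)"
  define m1a where "m1a = gt lam k (rowA k (Suc A1) (A2 - 1) 1 A4) (rowB k A1 A2 0) (rowC k 1 A2)"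
  define m1b where "m1b = gt lam k (rowA k (Suc A1) (A2 - 1) 1 A4) (rowB k (Suc A1) (A2 - 1) 0) (rowC k 0 L3)"
  define m1c where "m1c = gt lam k (rowA k (Suc A1) (A2 - 1) 1 A4) (rowB k A1 A2 0) (rowC k 0 L3)"
  define m2 where "m2 = gt lam k (rowA k A1 L3 0 A4) (rowB k A1 A2 0) (rowC k 1 A2)"
  define m2b where "m2b = gt lam k (rowA k A1 L3 0 A4) (rowB k A1 A2 0) (rowC k 0 L3)"
  define x3 where "x3 = gt lam k (rowA k A1 A2 0 (Suc A4)) (rowB k A1 A2 0) (rowC k 1 A2)"
  have inB: "x \<in> B lam n" "y \<in> B lam n" "m1 \<in> B lam n" "m1a \<in> B lam n" "m1b \<in> B lam n"
     "m1c \<in> B lam n" "m2 \<in> B lam n" "m2b \<in> B lam n"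
    unfolding x_def y_def m1_def m1a_def m1b_def m1c_def m2_def m2b_def
    by (rule ssyt_gt[OF part len kl]; use hA e in linarith)+
  have rng: "k+1 \<in> {1..n}" "k+2 \<in> {1..n}" "k+3 \<in> {1..n}" using kl len by auto
  have F: "F_tab (k+2) m1 = Some m1a" "F_tab (k+1) m1a = Some x"
          "F_tab (k+3) m1 = Some m1b" "F_tab (k+2) m1b = Some m1c" "F_tab (k+1) m1c = Some y"
          "F_tab (k+2) m2 = Some x" "F_tab (k+3) m2 = Some m2b" "F_tab (k+2) m2b = Some y"
          "F_tab (k+3) x = Some x3"
    unfolding x_def y_def m1_def m1a_def m1b_def m1c_def m2_def m2b_def x3_def
            apply (rule F2b; use hA in linarith)
           apply (rule F1a; use hA in linarith)
          apply (rule F3c; use hA in linarith)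
         apply (rule F2b; use hA in linarith)
        apply (rule F1a; use hA in linarith)
       apply (rule F2a; use hA in linarith)
      apply (rule F3c; use hA in linarith)
     apply (rule F2a; use hA in linarith)
    apply (rule F3a; use hA in linarith)
    done
  have st: "(m1, m1a) \<in> crystal_step lam n" "(m1a, x) \<in> crystal_step lam n"
     "(m1, m1b) \<in> crystal_step lam n" "(m1b, m1c) \<in> crystal_step lam n" "(m1c, y) \<in> crystal_step lam n"
     "(m2, x) \<in> crystal_step lam n" "(m2, m2b) \<in> crystal_step lam n" "(m2b, y) \<in> crystal_step lam n"
    unfolding crystal_step_def using inB F rng by blast+
  have le: "crystal_le lam n m1 x" "crystal_le lam n m1 y" "crystal_le lam n m2 x" "crystal_le lam n m2 y"
    unfolding crystal_le_def using inB st
    by (meson r_into_rtrancl rtrancl_trans)+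
  from lat inB(1,2) obtain z where "is_glb_in (B lam n) (crystal_le lam n) x y z"
    unfolding is_lattice_on_def by blast
  then have z: "z \<in> B lam n" "crystal_le lam n z x" "crystal_le lam n z y"
    "\<And>u. u \<in> B lam n \<Longrightarrow> crystal_le lam n u x \<Longrightarrow> crystal_le lam n u y \<Longrightarrow> crystal_le lam n u z"
    unfolding is_glb_in_def by blast+
  have m1z: "crystal_le lam n m1 z" using z(4)[OF inB(3) le(1,2)] .
  have m2z: "crystal_le lam n m2 z" using z(4)[OF inB(7) le(3,4)] .
  have mx: "\<forall>r<length x. \<forall>c<length (x!r). x!r!c \<le> max (m1!r!c) (m2!r!c)"
  proof (intro allI impI)
    fix r c assume r: "r < length x" and c: "c < length (x!r)"
    have rl: "r < length lam" using r length_gt[OF kl] by (simp add: x_def)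
    show "x!r!c \<le> max (m1!r!c) (m2!r!c)"
    proof (cases "r = k")
      case True
      have xk: "x!k = rowA k A1 A2 1 A4" "m1!k = rowA k (Suc A1) (A2 - 1) 1 A4" "m2!k = rowA k A1 L3 0 A4"
        unfolding x_def m1_def m2_def using nth_gt[OF _ kl] kl by auto
      have cl: "c < A1 + A2 + 1 + A4" using c True xk by (simp add: rowA_def)
      have "x!k!c = (if c < A1 then k+1 else if c < A1 + A2 then k+2 else if c < A1 + A2 + 1 then k+3 else k+4)"
        using cl xk by (simp add: nth_rowA)
      moreover have "m1!k!c = (if c < Suc A1 then k+1 else if c < Suc A1 + (A2 - 1) then k+2 else if c < Suc A1 + (A2 - 1) + 1 then k+3 else k+4)"
        using cl xk hA by (simp add: nth_rowA)
      moreover have "m2!k!c = (if c < A1 then k+1 else if c < A1 + L3 then k+2 else if c < A1 + L3 + 0 then k+3 else k+4)"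
        using cl xk hA by (simp add: nth_rowA)
      ultimately show ?thesis using True hA by auto
    next
      case False
      then have "x!r = m2!r" unfolding x_def m2_def using nth_gt[OF rl kl] by simp
      then show ?thesis by simp
    qed
  qed
  have zx: "z = x"
    by (rule tle_squeeze[OF crystal_le_tle[OF m1z] crystal_le_tle[OF m2z] crystal_le_tle[OF z(2)] mx])
  have notxy: "\<not> crystal_le lam n x y"
  proof
    assume "crystal_le lam n x y"
    then have sxy: "(x, y) \<in> (crystal_step lam n)\<^sup>*" unfolding crystal_le_def by simp
    define S where "S = replicate A2 (k+4) @ rowB k A1 A2 0 @ rowA k A1 A2 1 A4 @ Wa lam k"
    define j0 where "j0 = length (Wb lam k)"
    have wx: "reading_word x = Wb lam k @ (k+3) # S"
      unfolding x_def S_def by (simp add: reading_gt rowC_def)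
    have wy: "reading_word y = Wb lam k @ (k+4) # S"
      unfolding y_def S_def using hA by (simp add: reading_gt rowC_def)
    have wy2: "reading_word y = (reading_word x)[j0 := k+4]"
      unfolding wx wy j0_def by (rule list_update_length[symmetric])
    have wx0: "reading_word x ! j0 = k+3" unfolding wx j0_def by (rule nth_append_length)
    have j0l: "j0 < length (reading_word x)" unfolding wx j0_def by simp
    have "x \<noteq> y"
    proof
      assume "x = y"
      then have "reading_word x ! j0 = (reading_word x)[j0 := k+4] ! j0" using wy2 by simp
      then show False using wx0 j0l by simp
    qed
    then have "(x, y) \<in> (crystal_step lam n)\<^sup>+" using sxy by (meson rtranclD)
    then obtain T1 where s1: "(x, T1) \<in> crystal_step lam n" and s2: "(T1, y) \<in> (crystal_step lam n)\<^sup>*"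
      by (meson tranclD)
    from s1 obtain i where Fi: "F_tab i x = Some T1" unfolding crystal_step_def by auto
    from F_step[OF Fi] obtain j where j: "j < length (reading_word x)" "reading_word x ! j = i"
      "reading_word T1 = (reading_word x)[j := Suc i]" by blast
    have la: "list_all2 (\<le>) (reading_word T1) (reading_word y)"
      using tle_reading[OF star_tle[OF s2]] .
    show False
    proof (cases "j = j0")
      case True
      then have "i = k+3" using j wx0 by simp
      then have "T1 = x3" using Fi F(9) by simp
      moreover have "reading_word x3 ! j0 = k+3"
      proof -
        have "reading_word x3 = Wb lam k @ (k+3) # (replicate A2 (k+4) @ rowB k A1 A2 0 @ rowA k A1 A2 0 (Suc A4) @ Wa lam k)"
          unfolding x3_def by (simp add: reading_gt rowC_def)
        then show ?thesis unfolding j0_def by (simp only: nth_append_length)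
      qed
      moreover have "reading_word T1 ! j0 = Suc i" using j True by simp
      ultimately show False using \<open>i = k+3\<close> by simp
    next
      case False
      have "reading_word T1 ! j = Suc i" using j by simp
      moreover have "reading_word y ! j = i" using wy2 j False by simp
      moreover have "j < length (reading_word T1)" using j by simp
      ultimately show False using la by (auto simp: list_all2_conv_all_nth)
    qed
  qed
  show False using notxy z(3) zx by simp
qed

end
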